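(* Let $X=(G,H,\mu,\gamma)$ be a crossed module of finite groups and $\mathbb{K}$ a field. Then $D(G,H)$ is a braided (quasitriangular) bialgebra with $R$-matrix $$R=\sum_{h\in H}(\delta_h\otimes 1)\otimes(1\otimes\gamma(h))\in D(G,H)\otimes D(G,H),$$ where in the first factor $1$ is the neutral element of $G$ and in the second factor $1=\sum_{x\in H}\delta_x$ is the unit of $\mathbb{K}[H]$.
   Context: A crossed module of finite groups is a quadruple $X=(G,H,\mu,\gamma)$ where $G,H$ are finite groups, $\mu$ is a left action of $G$ on $H$ by group automorphisms, written $g\cdot h$, and $\gamma:H\to G$ is a group homomorphism with $\gamma(g\cdot h)=g\gamma(h)g^{-1}$ and $\gamma(h)\cdot n=hnh^{-1}$ for all $g\in G$, $h,n\in H$. $D(G,H)$ is the Hopf algebra $\mathbb{K}[H]\otimes\mathbb{K}G$, where $\mathbb{K}[H]$ is the dual of $\mathbb{K}H$ with basis $\{\delta_x\}_{x\in H}$ dual to the group elements, with product $(\delta_x\otimes a)(\delta_y\otimes b)=\delta_{x,a\cdot y}\delta_x\otimes ab$, unit $(\sum_{x\in H}\delta_x)\otimes 1$, coproduct $\Delta(\delta_x\otimes a)=\sum_{h\in H}(\delta_h\otimes a)\otimes(\delta_{h^{-1}x}\otimes a)$, counit $\varepsilon(\delta_x\otimes a)=\delta_{x,1}$ and antipode $S(\delta_x\otimes a)=\delta_{a^{-1}\cdot x^{-1}}\otimes a^{-1}$. A braided bialgebra is a bialgebra $A$ with an invertible $R\in A\otimes A$ such that $\Delta^{op}(x)=R\Delta(x)R^{-1}$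 for all $x$, $(\Delta\otimes\mathrm{id})(R)=R_{13}R_{23}$ and $(\mathrm{id}\otimes\Delta)(R)=R_{13}R_{12}$. *)

theory Defs
  imports "HOL-Algebra.Group"
begin

definition crossed_module ::
  "'g monoid \<Rightarrow> 'h monoid \<Rightarrow> ('g \<Rightarrow> 'h \<Rightarrow> 'h) \<Rightarrow> ('h \<Rightarrow> 'g) \<Rightarrow> bool" where
  "crossed_module G H act \<gamma> \<longleftrightarrow>
     group G \<and> group H \<and>
     (\<forall>g\<in>carrier G. act g \<in> iso H H) \<and>
     (\<forall>h\<in>carrier H. act \<one>\<^bsub>G\<^esub> h = h) \<and>
     (\<forall>g1\<in>carrier G. \<forall>g2\<in>carrier G. \<forall>h\<in>carrier H.
        act (g1 \<otimes>\<^bsub>G\<^esub> g2) h = act g1 (act g2 h)) \<and>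
     \<gamma> \<in> hom H G \<and>
     (\<forall>g\<in>carrier G. \<forall>h\<in>carrier H.
        \<gamma> (act g h) = g \<otimes>\<^bsub>G\<^esub> \<gamma> h \<otimes>\<^bsub>G\<^esub> inv\<^bsub>G\<^esub> g) \<and>
     (\<forall>h\<in>carrier H. \<forall>n\<in>carrier H.
        act (\<gamma> h) n = h \<otimes>\<^bsub>H\<^esub> n \<otimes>\<^bsub>H\<^esub> inv\<^bsub>H\<^esub> h)"

text \<open>A vector of the K-vector space with basis B is a function 'b => 'k vanishing
outside B (coefficients w.r.t. the basis). Tensor products of such spaces have
the basis B x B (resp. B x B x B).\<close>

definition vspace :: "'b set \<Rightarrow> ('b \<Rightarrow> 'k::zero) set" where
  "vspace B = {v. \<forall>x. x \<notin> B \<longrightarrow> v x = 0}"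

definition bvec :: "'b \<Rightarrow> 'b \<Rightarrow> 'k::zero_neq_one" where
  "bvec b = (\<lambda>x. if x = b then 1 else 0)"

definition lin_ext :: "'b set \<Rightarrow> ('b \<Rightarrow> 'c \<Rightarrow> 'k::comm_semiring_1) \<Rightarrow> ('b \<Rightarrow> 'k) \<Rightarrow> 'c \<Rightarrow> 'k" where
  "lin_ext B f v = (\<lambda>c. \<Sum>b\<in>B. v b * f b c)"

definition lin_form :: "'b set \<Rightarrow> ('b \<Rightarrow> 'k::comm_semiring_1) \<Rightarrow> ('b \<Rightarrow> 'k) \<Rightarrow> 'k" where
  "lin_form B f v = (\<Sum>b\<in>B. v b * f b)"

definition bmul :: "'b set \<Rightarrow> ('b \<Rightarrow> 'b \<Rightarrow> 'b \<Rightarrow> 'k::comm_semiring_1) \<Rightarrow> ('b \<Rightarrow> 'k) \<Rightarrow> ('b \<Rightarrow> 'k) \<Rightarrow> 'b \<Rightarrow> 'k" where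
  "bmul B m v w = (\<lambda>c. \<Sum>a\<in>B. \<Sum>b\<in>B. v a * w b * m a b c)"

definition tens :: "('b \<Rightarrow> 'k::times) \<Rightarrow> ('c \<Rightarrow> 'k) \<Rightarrow> 'b \<times> 'c \<Rightarrow> 'k" where
  "tens v w = (\<lambda>(x, y). v x * w y)"

definition tens_mult :: "('b \<Rightarrow> 'b \<Rightarrow> 'b \<Rightarrow> 'k::times) \<Rightarrow> ('c \<Rightarrow> 'c \<Rightarrow> 'c \<Rightarrow> 'k) \<Rightarrow>
    'b \<times> 'c \<Rightarrow> 'b \<times> 'c \<Rightarrow> 'b \<times> 'c \<Rightarrow> 'k" where
  "tens_mult m n p q = tens (m (fst p) (fst q)) (n (snd p) (snd q))"

abbreviation bmul2 where "bmul2 B m \<equiv> bmul (B \<times> B) (tens_mult m m)"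
abbreviation bmul3 where "bmul3 B m \<equiv> bmul (B \<times> B \<times> B) (tens_mult m (tens_mult m m))"

text \<open>(Delta tensor id) and (id tensor Delta) on basis elements of A tensor A.\<close>
definition comul_left :: "('b \<Rightarrow> 'b \<times> 'b \<Rightarrow> 'k::comm_semiring_1) \<Rightarrow> 'b \<times> 'b \<Rightarrow> 'b \<times> 'b \<times> 'b \<Rightarrow> 'k" where
  "comul_left \<Delta> p = (\<lambda>(x, y, z). \<Delta> (fst p) (x, y) * bvec (snd p) z)"

definition comul_right :: "('b \<Rightarrow> 'b \<times> 'b \<Rightarrow> 'k::comm_semiring_1) \<Rightarrow> 'b \<times> 'b \<Rightarrow> 'b \<times> 'b \<times> 'b \<Rightarrow> 'k" where
  "comul_right \<Delta> p = tens (bvec (fst p)) (\<Delta> (snd p))"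

definition swap_tens :: "('b \<times> 'b \<Rightarrow> 'k) \<Rightarrow> 'b \<times> 'b \<Rightarrow> 'k" where
  "swap_tens v = (\<lambda>(x, y). v (y, x))"

definition bialgebra ::
  "'b set \<Rightarrow> ('b \<Rightarrow> 'b \<Rightarrow> 'b \<Rightarrow> 'k::field) \<Rightarrow> ('b \<Rightarrow> 'k) \<Rightarrow> ('b \<Rightarrow> 'b \<times> 'b \<Rightarrow> 'k) \<Rightarrow> ('b \<Rightarrow> 'k) \<Rightarrow> bool" where
  "bialgebra B m u \<Delta> \<epsilon> \<longleftrightarrow>
     finite B \<and>
     (\<forall>a\<in>B. \<forall>b\<in>B. m a b \<in> vspace B) \<and> u \<in> vspace B \<and>
     (\<forall>a\<in>B. \<Delta> a \<in> vspace (B \<times> B)) \<and>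
     (\<forall>x\<in>vspace B. \<forall>y\<in>vspace B. \<forall>z\<in>vspace B. bmul B m (bmul B m x y) z = bmul B m x (bmul B m y z)) \<and>
     (\<forall>x\<in>vspace B. bmul B m u x = x \<and> bmul B m x u = x) \<and>
     (\<forall>x\<in>vspace B. lin_ext (B \<times> B) (comul_left \<Delta>) (lin_ext B \<Delta> x)
                  = lin_ext (B \<times> B) (comul_right \<Delta>) (lin_ext B \<Delta> x)) \<and>
     (\<forall>x\<in>vspace B. (\<lambda>y. \<Sum>a\<in>B. \<epsilon> a * lin_ext B \<Delta> x (a, y)) = x) \<and>
     (\<forall>x\<in>vspace B. (\<lambda>y. \<Sum>a\<in>B. lin_ext B \<Delta> x (y, a) * \<epsilon> a) = x) \<and>
     (\<forall>x\<in>vspace B. \<forall>y\<in>vspace B.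
        lin_ext B \<Delta> (bmul B m x y) = bmul2 B m (lin_ext B \<Delta> x) (lin_ext B \<Delta> y)) \<and>
     lin_ext B \<Delta> u = tens u u \<and>
     (\<forall>x\<in>vspace B. \<forall>y\<in>vspace B. lin_form B \<epsilon> (bmul B m x y) = lin_form B \<epsilon> x * lin_form B \<epsilon> y) \<and>
     lin_form B \<epsilon> u = 1"

definition braided_bialgebra ::
  "'b set \<Rightarrow> ('b \<Rightarrow> 'b \<Rightarrow> 'b \<Rightarrow> 'k::field) \<Rightarrow> ('b \<Rightarrow> 'k) \<Rightarrow> ('b \<Rightarrow> 'b \<times> 'b \<Rightarrow> 'k) \<Rightarrow> ('b \<Rightarrow> 'k)
     \<Rightarrow> ('b \<times> 'b \<Rightarrow> 'k) \<Rightarrow> bool" where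
  "braided_bialgebra B m u \<Delta> \<epsilon> R \<longleftrightarrow>
     bialgebra B m u \<Delta> \<epsilon> \<and>
     R \<in> vspace (B \<times> B) \<and>
     (\<exists>R'\<in>vspace (B \<times> B).
        bmul2 B m R R' = tens u u \<and> bmul2 B m R' R = tens u u \<and>
        (\<forall>x\<in>vspace B. swap_tens (lin_ext B \<Delta> x) = bmul2 B m (bmul2 B m R (lin_ext B \<Delta> x)) R')) \<and>
     lin_ext (B \<times> B) (comul_left \<Delta>) R =
       bmul3 B m (\<lambda>(x, y, z). R (x, z) * u y) (\<lambda>(x, y, z). u x * R (y, z)) \<and>
     lin_ext (B \<times> B) (comul_right \<Delta>) R =
       bmul3 B m (\<lambda>(x, y, z). R (x, z) * u y) (\<lambda>(x, y, z). R (x, y) * u z)"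

text \<open>Basis element (x,a) stands for delta_x tensor a.\<close>
definition D_basis :: "'g monoid \<Rightarrow> 'h monoid \<Rightarrow> ('h \<times> 'g) set" where
  "D_basis G H = carrier H \<times> carrier G"

definition D_mult :: "'g monoid \<Rightarrow> ('g \<Rightarrow> 'h \<Rightarrow> 'h) \<Rightarrow> 'h \<times> 'g \<Rightarrow> 'h \<times> 'g \<Rightarrow> 'h \<times> 'g \<Rightarrow> 'k::field" where
  "D_mult G act p q =
     (if fst p = act (snd p) (fst q) then bvec (fst p, snd p \<otimes>\<^bsub>G\<^esub> snd q) else (\<lambda>_. 0))"

definition D_unit :: "'g monoid \<Rightarrow> 'h monoid \<Rightarrow> 'h \<times> 'g \<Rightarrow> 'k::field" where
  "D_unit G H = (\<lambda>q. \<Sum>x\<in>carrier H. bvec (x, \<one>\<^bsub>G\<^esub>) q)"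

definition D_comul :: "'h monoid \<Rightarrow> 'h \<times> 'g \<Rightarrow> ('h \<times> 'g) \<times> ('h \<times> 'g) \<Rightarrow> 'k::field" where
  "D_comul H p =
     (\<lambda>q. \<Sum>h\<in>carrier H. tens (bvec (h, snd p)) (bvec (inv\<^bsub>H\<^esub> h \<otimes>\<^bsub>H\<^esub> fst p, snd p)) q)"

definition D_counit :: "'h monoid \<Rightarrow> 'h \<times> 'g \<Rightarrow> 'k::field" where
  "D_counit H p = (if fst p = \<one>\<^bsub>H\<^esub> then 1 else 0)"

definition D_R :: "'g monoid \<Rightarrow> 'h monoid \<Rightarrow> ('h \<Rightarrow> 'g) \<Rightarrow> ('h \<times> 'g) \<times> ('h \<times> 'g) \<Rightarrow> 'k::field" where
  "D_R G H \<gamma> = (\<lambda>q. \<Sum>h\<in>carrier H.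
      tens (bvec (h, \<one>\<^bsub>G\<^esub>)) (\<lambda>r. \<Sum>x\<in>carrier H. bvec (x, \<gamma> h) r) q)"

end

theory Submission
  imports Defs
begin

lemma vspace_zero: "v \<in> vspace A \<Longrightarrow> c \<notin> A \<Longrightarrow> v c = 0"
  by (simp add: vspace_def)

lemma sum_pair: "(\<Sum>p\<in>A \<times> B. g p) = (\<Sum>x\<in>A. \<Sum>y\<in>B. g (x,y))"
  by (simp add: sum.cartesian_product)

lemma sum_if_eq: "finite A \<Longrightarrow> (\<Sum>x\<in>A. if x = t \<and> P then f x else 0) = (if t \<in> A \<and> P then f t else 0)"
  by (cases P) simp_all

locale cmod =
  fixes G :: "'g monoid" and H :: "'h monoid"
    and act :: "'g \<Rightarrow> 'h \<Rightarrow> 'h" and \<gamma> :: "'h \<Rightarrow> 'g"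
  assumes cm: "crossed_module G H act \<gamma>"
    and fG: "finite (carrier G)" and fH: "finite (carrier H)"
begin

sublocale G: group G using cm by (simp add: crossed_module_def)
sublocale H: group H using cm by (simp add: crossed_module_def)

lemma act_hom: "g \<in> carrier G \<Longrightarrow> group_hom H H (act g)"
  using cm unfolding crossed_module_def iso_def group_hom_def group_hom_axioms_def
  by (auto intro: H.group_axioms)

lemma gam_hom: "group_hom H G \<gamma>"
  using cm unfolding crossed_module_def group_hom_def group_hom_axioms_def by auto

lemma act_closed[simp]: "g \<in> carrier G \<Longrightarrow> h \<in> carrier H \<Longrightarrow> act g h \<in> carrier H"
  using group_hom.hom_closed[OF act_hom] by blast

lemma act_mult[simp]: "g \<in> carrier G \<Longrightarrow> h \<in> carrier H \<Longrightarrow> k \<in> carrier H \<Longrightarrow>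
   act g (h \<otimes>\<^bsub>H\<^esub> k) = act g h \<otimes>\<^bsub>H\<^esub> act g k"
  using group_hom.hom_mult[OF act_hom] by blast

lemma act_one[simp]: "g \<in> carrier G \<Longrightarrow> act g \<one>\<^bsub>H\<^esub> = \<one>\<^bsub>H\<^esub>"
  using group_hom.hom_one[OF act_hom] by blast

lemma act_inv[simp]: "g \<in> carrier G \<Longrightarrow> h \<in> carrier H \<Longrightarrow> act g (inv\<^bsub>H\<^esub> h) = inv\<^bsub>H\<^esub> (act g h)"
  using group_hom.hom_inv[OF act_hom] by blast

lemma act_unit[simp]: "h \<in> carrier H \<Longrightarrow> act \<one>\<^bsub>G\<^esub> h = h"
  using cm unfolding crossed_module_def by auto

lemma act_comp: "g1 \<in> carrier G \<Longrightarrow> g2 \<in> carrier G \<Longrightarrow> h \<in> carrier H \<Longrightarrow>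
   act (g1 \<otimes>\<^bsub>G\<^esub> g2) h = act g1 (act g2 h)"
  using cm unfolding crossed_module_def by auto

lemma act_inv_act[simp]: "g \<in> carrier G \<Longrightarrow> h \<in> carrier H \<Longrightarrow> act (inv\<^bsub>G\<^esub> g) (act g h) = h"
  by (metis act_comp act_unit G.inv_closed G.l_inv)

lemma act_act_inv[simp]: "g \<in> carrier G \<Longrightarrow> h \<in> carrier H \<Longrightarrow> act g (act (inv\<^bsub>G\<^esub> g) h) = h"
  by (metis act_comp act_unit G.inv_closed G.r_inv)

lemma act_solve: "g \<in> carrier G \<Longrightarrow> h \<in> carrier H \<Longrightarrow> y \<in> carrier H \<Longrightarrow>
   (h = act g y) \<longleftrightarrow> (y = act (inv\<^bsub>G\<^esub> g) h)"
  by auto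

lemma gam_closed[simp]: "h \<in> carrier H \<Longrightarrow> \<gamma> h \<in> carrier G"
  using group_hom.hom_closed[OF gam_hom] by blast
lemma gam_mult[simp]: "h \<in> carrier H \<Longrightarrow> k \<in> carrier H \<Longrightarrow> \<gamma> (h \<otimes>\<^bsub>H\<^esub> k) = \<gamma> h \<otimes>\<^bsub>G\<^esub> \<gamma> k"
  using group_hom.hom_mult[OF gam_hom] by blast
lemma gam_inv[simp]: "h \<in> carrier H \<Longrightarrow> \<gamma> (inv\<^bsub>H\<^esub> h) = inv\<^bsub>G\<^esub> (\<gamma> h)"
  using group_hom.hom_inv[OF gam_hom] by blast
lemma gam_one[simp]: "\<gamma> \<one>\<^bsub>H\<^esub> = \<one>\<^bsub>G\<^esub>"
  using group_hom.hom_one[OF gam_hom] by blast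
lemma gam_act: "g \<in> carrier G \<Longrightarrow> h \<in> carrier H \<Longrightarrow> \<gamma> (act g h) = g \<otimes>\<^bsub>G\<^esub> \<gamma> h \<otimes>\<^bsub>G\<^esub> inv\<^bsub>G\<^esub> g"
  using cm unfolding crossed_module_def by auto
lemma act_gam: "h \<in> carrier H \<Longrightarrow> n \<in> carrier H \<Longrightarrow> act (\<gamma> h) n = h \<otimes>\<^bsub>H\<^esub> n \<otimes>\<^bsub>H\<^esub> inv\<^bsub>H\<^esub> h"
  using cm unfolding crossed_module_def by auto


lemma D_mult_eq:
  assumes "p \<in> D_basis G H" "q \<in> D_basis G H"
  shows "(D_mult G act p q c :: 'k::field) = (if fst p = fst c \<and> c \<in> D_basis G H \<and>
     q = (act (inv\<^bsub>G\<^esub> (snd p)) (fst c), inv\<^bsub>G\<^esub> (snd p) \<otimes>\<^bsub>G\<^esub> snd c) then 1 else 0)"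
proof -
  obtain x a where p: "p = (x,a)" by force
  obtain y b where q: "q = (y,b)" by force
  obtain z e where c: "c = (z,e)" by force
  have xa: "x \<in> carrier H" "a \<in> carrier G" "y \<in> carrier H" "b \<in> carrier G"
    using assms p q by (auto simp: D_basis_def)
  have "(x = act a y \<and> (z,e) = (x, a \<otimes>\<^bsub>G\<^esub> b)) \<longleftrightarrow>
     (x = z \<and> (z \<in> carrier H \<and> e \<in> carrier G) \<and> (y = act (inv\<^bsub>G\<^esub> a) z \<and> b = inv\<^bsub>G\<^esub> a \<otimes>\<^bsub>G\<^esub> e))"
    using xa by (auto simp: G.inv_solve_left G.m_assoc[symmetric])
  then show ?thesis unfolding p q c D_mult_def bvec_def D_basis_def by auto
qed

lemma mult_sum:
  "(\<Sum>p\<in>D_basis G H. \<Sum>q\<in>D_basis G H. F p q * (D_mult G act p q c :: 'k::field)) =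
   (if c \<in> D_basis G H then \<Sum>a\<in>carrier G. F (fst c, a) (act (inv\<^bsub>G\<^esub> a) (fst c), inv\<^bsub>G\<^esub> a \<otimes>\<^bsub>G\<^esub> snd c) else 0)"
proof -
  have fB: "finite (D_basis G H)" using fG fH by (simp add: D_basis_def)
  have "(\<Sum>p\<in>D_basis G H. \<Sum>q\<in>D_basis G H. F p q * (D_mult G act p q c :: 'k::field)) =
     (\<Sum>p\<in>D_basis G H. if fst p = fst c \<and> c \<in> D_basis G H then F p (act (inv\<^bsub>G\<^esub> (snd p)) (fst c), inv\<^bsub>G\<^esub> (snd p) \<otimes>\<^bsub>G\<^esub> snd c) else 0)"
  proof (rule sum.cong[OF refl])
    fix p assume p: "p \<in> D_basis G H"
    have "(\<Sum>q\<in>D_basis G H. F p q * (D_mult G act p q c :: 'k::field)) =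
      (\<Sum>q\<in>D_basis G H. if fst p = fst c \<and> c \<in> D_basis G H then (if q = (act (inv\<^bsub>G\<^esub> (snd p)) (fst c), inv\<^bsub>G\<^esub> (snd p) \<otimes>\<^bsub>G\<^esub> snd c) then F p q else 0) else 0)"
      by (rule sum.cong[OF refl]) (simp add: D_mult_eq[OF p])
    also have "\<dots> = (if fst p = fst c \<and> c \<in> D_basis G H then F p (act (inv\<^bsub>G\<^esub> (snd p)) (fst c), inv\<^bsub>G\<^esub> (snd p) \<otimes>\<^bsub>G\<^esub> snd c) else 0)"
      using fB p by (auto simp: D_basis_def)
    finally show "(\<Sum>q\<in>D_basis G H. F p q * (D_mult G act p q c :: 'k::field)) = \<dots>" .
  qed
  also have "\<dots> = (\<Sum>x\<in>carrier H. \<Sum>a\<in>carrier G. if x = fst c \<and> c \<in> D_basis G H then F (x,a) (act (inv\<^bsub>G\<^esub> a) (fst c), inv\<^bsub>G\<^esub> a \<otimes>\<^bsub>G\<^esub> snd c) else 0)"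
    unfolding D_basis_def sum_pair fst_conv snd_conv by (rule refl)
  also have "\<dots> = (\<Sum>a\<in>carrier G. \<Sum>x\<in>carrier H. if x = fst c \<and> c \<in> D_basis G H then F (x,a) (act (inv\<^bsub>G\<^esub> a) (fst c), inv\<^bsub>G\<^esub> a \<otimes>\<^bsub>G\<^esub> snd c) else 0)"
    by (rule sum.swap)
  also have "\<dots> = (if c \<in> D_basis G H then \<Sum>a\<in>carrier G. F (fst c, a) (act (inv\<^bsub>G\<^esub> a) (fst c), inv\<^bsub>G\<^esub> a \<otimes>\<^bsub>G\<^esub> snd c) else 0)"
    using fH by (cases "c \<in> D_basis G H") (auto simp: D_basis_def sum_if_eq)
  finally show ?thesis .
qed


definition sh :: "'g \<Rightarrow> 'h \<times> 'g \<Rightarrow> 'h \<times> 'g" where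
  "sh a c = (act (inv\<^bsub>G\<^esub> a) (fst c), inv\<^bsub>G\<^esub> a \<otimes>\<^bsub>G\<^esub> snd c)"

abbreviation "B \<equiv> D_basis G H"

lemma mem_B: "p \<in> D_basis G H \<longleftrightarrow> fst p \<in> carrier H \<and> snd p \<in> carrier G"
  by (cases p) (simp add: D_basis_def)

lemma sumB: "(\<Sum>p\<in>D_basis G H. f p) = (\<Sum>x\<in>carrier H. \<Sum>a\<in>carrier G. f (x,a))"
  unfolding D_basis_def by (rule sum_pair)

lemma finB: "finite B" using fG fH by (simp add: D_basis_def)

lemma mult_sum':
  "(\<Sum>p\<in>B. \<Sum>q\<in>B. F p q * (D_mult G act p q c :: 'k::field)) =
   (if c \<in> B then \<Sum>a\<in>carrier G. F (fst c, a) (sh a c) else 0)"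
  unfolding sh_def by (rule mult_sum)

lemma bmul_eq:
  "bmul B (D_mult G act) v w c = (if c \<in> B then \<Sum>a\<in>carrier G. v (fst c, a) * (w (sh a c) :: 'k::field) else 0)"
  unfolding bmul_def by (rule mult_sum')

lemma bmul2_eq:
  "bmul2 B (D_mult G act) V W (c1, c2) = (if c1 \<in> B \<and> c2 \<in> B then
     \<Sum>a1\<in>carrier G. \<Sum>a2\<in>carrier G. V ((fst c1, a1), (fst c2, a2)) * (W (sh a1 c1, sh a2 c2) :: 'k::field) else 0)"
proof -
  let ?m = "D_mult G act :: _ \<Rightarrow> _ \<Rightarrow> _ \<Rightarrow> 'k"
  have "bmul2 B (D_mult G act) V W (c1, c2) =
    (\<Sum>p1\<in>B. \<Sum>p2\<in>B. \<Sum>q1\<in>B. \<Sum>q2\<in>B. V (p1,p2) * W (q1,q2) * (?m p1 q1 c1 * ?m p2 q2 c2))"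
    by (simp add: bmul_def tens_mult_def tens_def sum_pair)
  also have "\<dots> = (\<Sum>p1\<in>B. \<Sum>q1\<in>B. \<Sum>p2\<in>B. \<Sum>q2\<in>B. V (p1,p2) * W (q1,q2) * (?m p1 q1 c1 * ?m p2 q2 c2))"
    by (rule sum.cong[OF refl], rule sum.swap)
  also have "\<dots> = (\<Sum>p1\<in>B. \<Sum>q1\<in>B. \<Sum>p2\<in>B. \<Sum>q2\<in>B. (V (p1,p2) * W (q1,q2) * ?m p1 q1 c1) * ?m p2 q2 c2)"
    by (intro sum.cong refl) (simp add: ac_simps)
  also have "\<dots> = (\<Sum>p1\<in>B. \<Sum>q1\<in>B. if c2 \<in> B then \<Sum>a2\<in>carrier G. V (p1,(fst c2, a2)) * W (q1, sh a2 c2) * ?m p1 q1 c1 else 0)"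
    by (simp only: mult_sum')
  also have "\<dots> = (if c2 \<in> B then (\<Sum>p1\<in>B. \<Sum>q1\<in>B. (\<Sum>a2\<in>carrier G. V (p1,(fst c2, a2)) * W (q1, sh a2 c2)) * ?m p1 q1 c1) else 0)"
    by (cases "c2 \<in> B") (simp_all add: sum_distrib_right)
  also have "\<dots> = (if c2 \<in> B then (if c1 \<in> B then
     \<Sum>a1\<in>carrier G. \<Sum>a2\<in>carrier G. V ((fst c1, a1), (fst c2, a2)) * W (sh a1 c1, sh a2 c2) else 0) else 0)"
    by (simp only: mult_sum')
  finally show ?thesis by simp
qed


lemma bmul3_eq:
  "bmul3 B (D_mult G act) X Y (c1, c2, c3) = (if c1 \<in> B \<and> c2 \<in> B \<and> c3 \<in> B then
     \<Sum>a1\<in>carrier G. \<Sum>a2\<in>carrier G. \<Sum>a3\<in>carrier G. X ((fst c1, a1), (fst c2, a2), (fst c3, a3)) *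
        (Y (sh a1 c1, sh a2 c2, sh a3 c3) :: 'k::field) else 0)"
proof -
  let ?m = "D_mult G act :: _ \<Rightarrow> _ \<Rightarrow> _ \<Rightarrow> 'k"
  have "bmul3 B (D_mult G act) X Y (c1, c2, c3) =
    (\<Sum>p1\<in>B. \<Sum>p\<in>B \<times> B. \<Sum>q1\<in>B. \<Sum>q\<in>B \<times> B. X (p1,p) * Y (q1,q) * (?m p1 q1 c1 * tens_mult ?m ?m p q (c2,c3)))"
    by (simp add: bmul_def tens_mult_def tens_def sum_pair)
  also have "\<dots> = (\<Sum>p1\<in>B. \<Sum>q1\<in>B. \<Sum>p\<in>B \<times> B. \<Sum>q\<in>B \<times> B. X (p1,p) * Y (q1,q) * (?m p1 q1 c1 * tens_mult ?m ?m p q (c2,c3)))"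
    by (rule sum.cong[OF refl], rule sum.swap)
  also have "\<dots> = (\<Sum>p1\<in>B. \<Sum>q1\<in>B. bmul2 B ?m (\<lambda>p. X (p1,p) * ?m p1 q1 c1) (\<lambda>q. Y (q1,q)) (c2,c3))"
    unfolding bmul_def by (intro sum.cong refl) (simp add: ac_simps)
  also have "\<dots> = (\<Sum>p1\<in>B. \<Sum>q1\<in>B. (if c2 \<in> B \<and> c3 \<in> B then
     \<Sum>a2\<in>carrier G. \<Sum>a3\<in>carrier G. X (p1, (fst c2, a2), (fst c3, a3)) * Y (q1, sh a2 c2, sh a3 c3) else 0) * ?m p1 q1 c1)"
    unfolding bmul2_eq by (intro sum.cong refl) (simp add: ac_simps sum_distrib_left)
  also have "\<dots> = (if c1 \<in> B then \<Sum>a1\<in>carrier G. (if c2 \<in> B \<and> c3 \<in> B then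
     \<Sum>a2\<in>carrier G. \<Sum>a3\<in>carrier G. X ((fst c1, a1), (fst c2, a2), (fst c3, a3)) * Y (sh a1 c1, sh a2 c2, sh a3 c3) else 0) else 0)"
    by (simp only: mult_sum')
  finally show ?thesis by (cases "c2 \<in> B \<and> c3 \<in> B") auto
qed


lemma unit_eq: "(D_unit G H c :: 'k::field) = (if fst c \<in> carrier H \<and> snd c = \<one>\<^bsub>G\<^esub> then 1 else 0)"
proof -
  have "(D_unit G H c :: 'k) = (\<Sum>x\<in>carrier H. if x = fst c \<and> snd c = \<one>\<^bsub>G\<^esub> then 1 else 0)"
    unfolding D_unit_def bvec_def by (rule sum.cong) (auto simp: prod_eq_iff)
  then show ?thesis using fH by (simp add: sum_if_eq)
qed

lemma comul_eq: "(D_comul H p ((h,a),(k,b)) :: 'k::field) =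
   (if h \<in> carrier H \<and> a = snd p \<and> b = snd p \<and> k = inv\<^bsub>H\<^esub> h \<otimes>\<^bsub>H\<^esub> fst p then 1 else 0)"
proof -
  have "(D_comul H p ((h,a),(k,b)) :: 'k) = (\<Sum>x\<in>carrier H. if x = h \<and> (a = snd p \<and> b = snd p \<and> k = inv\<^bsub>H\<^esub> h \<otimes>\<^bsub>H\<^esub> fst p) then 1 else 0)"
    unfolding D_comul_def bvec_def tens_def by (rule sum.cong) auto
  then show ?thesis using fH by (simp add: sum_if_eq)
qed

lemma comul_lin_eq: "lin_ext B (D_comul H) v ((h,a),(k,b)) =
   (if h \<in> carrier H \<and> k \<in> carrier H \<and> a \<in> carrier G \<and> b = a then v (h \<otimes>\<^bsub>H\<^esub> k, a) else (0::'k::field))"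
proof -
  have "lin_ext B (D_comul H) v ((h,a),(k,b)) = (\<Sum>x\<in>carrier H. \<Sum>g\<in>carrier G. v (x,g) *
     (if h \<in> carrier H \<and> a = g \<and> b = g \<and> k = inv\<^bsub>H\<^esub> h \<otimes>\<^bsub>H\<^esub> x then 1 else 0))"
    unfolding lin_ext_def D_basis_def sum_pair comul_eq by simp
  also have "\<dots> = (\<Sum>x\<in>carrier H. if x = h \<otimes>\<^bsub>H\<^esub> k \<and> (h \<in> carrier H \<and> k \<in> carrier H \<and> a \<in> carrier G \<and> b = a) then 
      (\<Sum>g\<in>carrier G. if g = a \<and> True then v (x,g) else 0) else 0)"
  proof (rule sum.cong[OF refl])
    fix x assume x: "x \<in> carrier H"
    show "(\<Sum>g\<in>carrier G. v (x,g) *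
     (if h \<in> carrier H \<and> a = g \<and> b = g \<and> k = inv\<^bsub>H\<^esub> h \<otimes>\<^bsub>H\<^esub> x then 1 else 0)) = 
      (if x = h \<otimes>\<^bsub>H\<^esub> k \<and> (h \<in> carrier H \<and> k \<in> carrier H \<and> a \<in> carrier G \<and> b = a) then 
      (\<Sum>g\<in>carrier G. if g = a \<and> True then v (x,g) else 0) else 0)"
    proof (cases "h \<in> carrier H \<and> k \<in> carrier H \<and> a \<in> carrier G \<and> b = a")
      case True
      then have "k = inv\<^bsub>H\<^esub> h \<otimes>\<^bsub>H\<^esub> x \<longleftrightarrow> x = h \<otimes>\<^bsub>H\<^esub> k" using x by (metis H.inv_solve_left)
      then show ?thesis using True by (cases "x = h \<otimes>\<^bsub>H\<^esub> k") (auto intro!: sum.cong sum.neutral)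
    next
      case False
      then show ?thesis using x by (auto intro!: sum.neutral)
    qed
  qed
  also have "\<dots> = (if h \<in> carrier H \<and> k \<in> carrier H \<and> a \<in> carrier G \<and> b = a then v (h \<otimes>\<^bsub>H\<^esub> k, a) else 0)"
    using fG fH by (simp add: sum_if_eq)
  finally show ?thesis .
qed


lemma counit_lin_eq: "lin_form B (D_counit H) v = (\<Sum>a\<in>carrier G. (v (\<one>\<^bsub>H\<^esub>, a) :: 'k::field))"
proof -
  have "lin_form B (D_counit H) v = (\<Sum>a\<in>carrier G. \<Sum>x\<in>carrier H. if x = \<one>\<^bsub>H\<^esub> \<and> True then v (x, a) else (0::'k))"
    unfolding lin_form_def D_basis_def sum_pair D_counit_def by (subst sum.swap) (auto intro!: sum.cong)
  then show ?thesis using fH by (simp add: sum_if_eq)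
qed

lemma counit_eq: "D_counit H p = (if fst p = \<one>\<^bsub>H\<^esub> then 1 else (0::'k::field))"
  by (simp add: D_counit_def)

lemma comul_left_eq: "lin_ext (B \<times> B) (comul_left (D_comul H)) V ((h,a),(k,b),l) =
   (if h \<in> carrier H \<and> k \<in> carrier H \<and> a \<in> carrier G \<and> b = a \<and> l \<in> B then V ((h \<otimes>\<^bsub>H\<^esub> k, a), l) else (0::'k::field))"
proof -
  have "lin_ext (B \<times> B) (comul_left (D_comul H)) V ((h,a),(k,b),l) =
     (\<Sum>p1\<in>B. \<Sum>p2\<in>B. if p2 = l \<and> True then V (p1,p2) * D_comul H p1 ((h,a),(k,b)) else 0)"
    unfolding lin_ext_def sum_pair comul_left_def bvec_def by (auto intro!: sum.cong)
  also have "\<dots> = (\<Sum>p1\<in>B. if l \<in> B then V (p1,l) * D_comul H p1 ((h,a),(k,b)) else 0)"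
    using finB by (simp add: sum_if_eq)
  also have "\<dots> = (if l \<in> B then lin_ext B (D_comul H) (\<lambda>p. V (p,l)) ((h,a),(k,b)) else 0)"
    unfolding lin_ext_def by auto
  finally show ?thesis by (auto simp: comul_lin_eq)
qed

lemma comul_right_eq: "lin_ext (B \<times> B) (comul_right (D_comul H)) V (l,(h,a),(k,b)) =
   (if h \<in> carrier H \<and> k \<in> carrier H \<and> a \<in> carrier G \<and> b = a \<and> l \<in> B then V (l, (h \<otimes>\<^bsub>H\<^esub> k, a)) else (0::'k::field))"
proof -
  have "lin_ext (B \<times> B) (comul_right (D_comul H)) V (l,(h,a),(k,b)) =
     (\<Sum>p1\<in>B. if p1 = l \<and> True then (\<Sum>p2\<in>B. V (p1,p2) * D_comul H p2 ((h,a),(k,b))) else 0)"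
    unfolding lin_ext_def sum_pair comul_right_def bvec_def tens_def by (auto intro!: sum.cong)
  also have "\<dots> = (if l \<in> B then lin_ext B (D_comul H) (\<lambda>p. V (l,p)) ((h,a),(k,b)) else 0)"
    using finB unfolding lin_ext_def by (simp add: sum_if_eq)
  finally show ?thesis by (auto simp: comul_lin_eq)
qed

lemma R_eq: "(D_R G H \<gamma> ((x,a),(y,b)) :: 'k::field) =
   (if x \<in> carrier H \<and> a = \<one>\<^bsub>G\<^esub> \<and> y \<in> carrier H \<and> b = \<gamma> x then 1 else 0)"
proof -
  have "(D_R G H \<gamma> ((x,a),(y,b)) :: 'k) = (\<Sum>h\<in>carrier H. if h = x \<and> a = \<one>\<^bsub>G\<^esub> then 
     (\<Sum>z\<in>carrier H. if z = y \<and> b = \<gamma> h then 1 else 0) else 0)"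
    unfolding D_R_def bvec_def tens_def by (auto intro!: sum.cong simp: sum_distrib_left)
  then show ?thesis using fH by (simp add: sum_if_eq)
qed


lemma sum_G_shift:
  assumes b: "b \<in> carrier G"
  shows "(\<Sum>a\<in>carrier G. f a) = (\<Sum>d\<in>carrier G. f (b \<otimes>\<^bsub>G\<^esub> d))"
proof -
  have "bij_betw (\<lambda>d. b \<otimes>\<^bsub>G\<^esub> d) (carrier G) (carrier G)"
    by (rule bij_betw_byWitness[where f'="\<lambda>a. inv\<^bsub>G\<^esub> b \<otimes>\<^bsub>G\<^esub> a"])
       (use b in \<open>auto simp: G.m_assoc[symmetric]\<close>)
  then show ?thesis by (rule sum.reindex_bij_betw[symmetric])
qed

lemma mult_assoc:
  "bmul B (D_mult G act) (bmul B (D_mult G act) x y) z = bmul B (D_mult G act) x (bmul B (D_mult G act) y z :: _ \<Rightarrow> 'k::field)"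
proof
  fix c :: "'h \<times> 'g"
  obtain z0 e where c: "c = (z0, e)" by force
  show "bmul B (D_mult G act) (bmul B (D_mult G act) x y) z c = bmul B (D_mult G act) x (bmul B (D_mult G act) y z) c"
  proof (cases "c \<in> B")
    case False then show ?thesis by (simp add: bmul_eq)
  next
    case True
    then have z0: "z0 \<in> carrier H" and e: "e \<in> carrier G" using c by (auto simp: D_basis_def)
    have "bmul B (D_mult G act) (bmul B (D_mult G act) x y) z c =
       (\<Sum>a\<in>carrier G. (\<Sum>b\<in>carrier G. x (z0, b) * y (act (inv\<^bsub>G\<^esub> b) z0, inv\<^bsub>G\<^esub> b \<otimes>\<^bsub>G\<^esub> a)) * z (act (inv\<^bsub>G\<^esub> a) z0, inv\<^bsub>G\<^esub> a \<otimes>\<^bsub>G\<^esub> e))"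
      using True c z0 by (auto simp: bmul_eq sh_def mem_B intro!: sum.cong)
    also have "\<dots> = (\<Sum>b\<in>carrier G. x (z0, b) * (\<Sum>a\<in>carrier G. y (act (inv\<^bsub>G\<^esub> b) z0, inv\<^bsub>G\<^esub> b \<otimes>\<^bsub>G\<^esub> a) * z (act (inv\<^bsub>G\<^esub> a) z0, inv\<^bsub>G\<^esub> a \<otimes>\<^bsub>G\<^esub> e)))"
      by (simp add: sum_distrib_left sum_distrib_right ac_simps) (rule sum.swap)
    also have "\<dots> = (\<Sum>b\<in>carrier G. x (z0, b) * (\<Sum>d\<in>carrier G. y (act (inv\<^bsub>G\<^esub> b) z0, d) * z (act (inv\<^bsub>G\<^esub> d) (act (inv\<^bsub>G\<^esub> b) z0), inv\<^bsub>G\<^esub> d \<otimes>\<^bsub>G\<^esub> (inv\<^bsub>G\<^esub> b \<otimes>\<^bsub>G\<^esub> e))))"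
    proof (rule sum.cong[OF refl])
      fix b assume b: "b \<in> carrier G"
      show "x (z0, b) * (\<Sum>a\<in>carrier G. y (act (inv\<^bsub>G\<^esub> b) z0, inv\<^bsub>G\<^esub> b \<otimes>\<^bsub>G\<^esub> a) * z (act (inv\<^bsub>G\<^esub> a) z0, inv\<^bsub>G\<^esub> a \<otimes>\<^bsub>G\<^esub> e)) =
         x (z0, b) * (\<Sum>d\<in>carrier G. y (act (inv\<^bsub>G\<^esub> b) z0, d) * z (act (inv\<^bsub>G\<^esub> d) (act (inv\<^bsub>G\<^esub> b) z0), inv\<^bsub>G\<^esub> d \<otimes>\<^bsub>G\<^esub> (inv\<^bsub>G\<^esub> b \<otimes>\<^bsub>G\<^esub> e)))"
        using b z0 e by (subst sum_G_shift[OF b])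
          (auto intro!: sum.cong simp: G.m_assoc[symmetric] G.inv_mult_group act_comp)
    qed
    also have "\<dots> = bmul B (D_mult G act) x (bmul B (D_mult G act) y z) c"
      using True c z0 by (auto simp: bmul_eq sh_def mem_B intro!: sum.cong)
    finally show ?thesis .
  qed
qed


lemma unit_left:
  assumes v: "v \<in> vspace B"
  shows "bmul B (D_mult G act) (D_unit G H) v = (v :: _ \<Rightarrow> 'k::field)"
proof
  fix c :: "'h \<times> 'g"
  show "bmul B (D_mult G act) (D_unit G H) v c = v c"
  proof (cases "c \<in> B")
    case False then show ?thesis by (simp add: bmul_eq vspace_zero[OF v False])
  next
    case True
    then have "bmul B (D_mult G act) (D_unit G H) v c = (\<Sum>a\<in>carrier G. if a = \<one>\<^bsub>G\<^esub> \<and> True then v (sh a c) else 0)"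
      by (auto simp: bmul_eq unit_eq mem_B intro!: sum.cong)
    also have "\<dots> = v c" using True fG by (simp add: sum_if_eq sh_def mem_B)
    finally show ?thesis .
  qed
qed

lemma unit_right:
  assumes v: "v \<in> vspace B"
  shows "bmul B (D_mult G act) v (D_unit G H) = (v :: _ \<Rightarrow> 'k::field)"
proof
  fix c :: "'h \<times> 'g"
  show "bmul B (D_mult G act) v (D_unit G H) c = v c"
  proof (cases "c \<in> B")
    case False then show ?thesis by (simp add: bmul_eq vspace_zero[OF v False])
  next
    case True
    then have "bmul B (D_mult G act) v (D_unit G H) c = (\<Sum>a\<in>carrier G. if a = snd c \<and> True then v (fst c, a) else 0)"
      by (auto simp: bmul_eq unit_eq mem_B sh_def G.inv_solve_left' intro!: sum.cong)
    also have "\<dots> = v c" using True fG by (simp add: sum_if_eq mem_B)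
    finally show ?thesis .
  qed
qed


lemma coassoc:
  "lin_ext (B \<times> B) (comul_left (D_comul H)) (lin_ext B (D_comul H) x) =
   lin_ext (B \<times> B) (comul_right (D_comul H)) (lin_ext B (D_comul H) (x :: _ \<Rightarrow> 'k::field))"
proof
  fix P :: "('h \<times> 'g) \<times> ('h \<times> 'g) \<times> ('h \<times> 'g)"
  obtain h a k b l c where P: "P = ((h,a),(k,b),(l,c))" by (metis prod.collapse)
  show "lin_ext (B \<times> B) (comul_left (D_comul H)) (lin_ext B (D_comul H) x) P =
   lin_ext (B \<times> B) (comul_right (D_comul H)) (lin_ext B (D_comul H) x) P"
    unfolding P comul_left_eq comul_right_eq comul_lin_eq
    by (auto simp: mem_B H.m_assoc)
qed


lemma counit_left:
  assumes v: "v \<in> vspace B"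
  shows "(\<lambda>y. \<Sum>a\<in>B. D_counit H a * lin_ext B (D_comul H) v (a, y)) = (v :: _ \<Rightarrow> 'k::field)"
proof
  fix y :: "'h \<times> 'g"
  obtain k b where y: "y = (k,b)" by force
  have "(\<Sum>a\<in>B. D_counit H a * lin_ext B (D_comul H) v (a, y)) =
     (\<Sum>h\<in>carrier H. if h = \<one>\<^bsub>H\<^esub> \<and> True then (\<Sum>a\<in>carrier G. if a = b \<and> k \<in> carrier H then v (h \<otimes>\<^bsub>H\<^esub> k, a) else 0) else 0)"
    unfolding sumB y comul_lin_eq counit_eq by (auto intro!: sum.cong)
  also have "\<dots> = v y" using fG fH vspace_zero[OF v, of y] by (auto simp: sum_if_eq y mem_B)
  finally show "(\<Sum>a\<in>B. D_counit H a * lin_ext B (D_comul H) v (a, y)) = v y" .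
qed

lemma counit_right:
  assumes v: "v \<in> vspace B"
  shows "(\<lambda>y. \<Sum>a\<in>B. lin_ext B (D_comul H) v (y, a) * D_counit H a) = (v :: _ \<Rightarrow> 'k::field)"
proof
  fix y :: "'h \<times> 'g"
  obtain h b where y: "y = (h,b)" by force
  have "(\<Sum>a\<in>B. lin_ext B (D_comul H) v (y, a) * D_counit H a) =
     (\<Sum>k\<in>carrier H. if k = \<one>\<^bsub>H\<^esub> \<and> True then (\<Sum>a\<in>carrier G. if a = b \<and> h \<in> carrier H then v (h \<otimes>\<^bsub>H\<^esub> k, b) else 0) else 0)"
    unfolding sumB y comul_lin_eq counit_eq by (auto intro!: sum.cong)
  also have "\<dots> = v y" using fG fH vspace_zero[OF v, of y] by (auto simp: sum_if_eq y mem_B)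
  finally show "(\<Sum>a\<in>B. lin_ext B (D_comul H) v (y, a) * D_counit H a) = v y" .
qed


lemma comul_mult:
  "lin_ext B (D_comul H) (bmul B (D_mult G act) x y) =
   bmul2 B (D_mult G act) (lin_ext B (D_comul H) x) (lin_ext B (D_comul H) (y :: _ \<Rightarrow> 'k::field))"
proof
  fix P :: "('h \<times> 'g) \<times> ('h \<times> 'g)"
  obtain h a k b where P: "P = ((h,a),(k,b))" by (metis prod.collapse)
  show "lin_ext B (D_comul H) (bmul B (D_mult G act) x y) P =
   bmul2 B (D_mult G act) (lin_ext B (D_comul H) x) (lin_ext B (D_comul H) y) P"
  proof (cases "h \<in> carrier H \<and> k \<in> carrier H \<and> a \<in> carrier G \<and> b \<in> carrier G")
    case False
    then show ?thesis unfolding P comul_lin_eq bmul2_eq by (auto simp: mem_B)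
  next
    case True
    then have hk: "h \<in> carrier H" "k \<in> carrier H" "a \<in> carrier G" "b \<in> carrier G" by auto
    have "bmul2 B (D_mult G act) (lin_ext B (D_comul H) x) (lin_ext B (D_comul H) y) P =
      (\<Sum>a1\<in>carrier G. \<Sum>a2\<in>carrier G. if a2 = a1 \<and> b = a then x (h \<otimes>\<^bsub>H\<^esub> k, a1) * y (act (inv\<^bsub>G\<^esub> a1) (h \<otimes>\<^bsub>H\<^esub> k), inv\<^bsub>G\<^esub> a1 \<otimes>\<^bsub>G\<^esub> a) else 0)"
      unfolding P bmul2_eq comul_lin_eq using hk
      by (auto simp: mem_B sh_def comul_lin_eq intro!: sum.cong)
    also have "\<dots> = lin_ext B (D_comul H) (bmul B (D_mult G act) x y) P"
      unfolding P comul_lin_eq bmul_eq using hk fG by (auto simp: sum_if_eq mem_B sh_def intro!: sum.cong)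
    finally show ?thesis by simp
  qed
qed


lemma comul_unit: "lin_ext B (D_comul H) (D_unit G H) = tens (D_unit G H) (D_unit G H :: _ \<Rightarrow> 'k::field)"
proof
  fix P :: "('h \<times> 'g) \<times> ('h \<times> 'g)"
  obtain h a k b where P: "P = ((h,a),(k,b))" by (metis prod.collapse)
  show "lin_ext B (D_comul H) (D_unit G H) P = tens (D_unit G H) (D_unit G H :: _ \<Rightarrow> 'k::field) P"
    unfolding P comul_lin_eq by (auto simp: unit_eq tens_def)
qed

lemma counit_mult: "lin_form B (D_counit H) (bmul B (D_mult G act) x y) =
  lin_form B (D_counit H) x * lin_form B (D_counit H) (y :: _ \<Rightarrow> 'k::field)"
proof -
  have "lin_form B (D_counit H) (bmul B (D_mult G act) x y) =
     (\<Sum>a\<in>carrier G. \<Sum>g\<in>carrier G. x (\<one>\<^bsub>H\<^esub>, g) * y (\<one>\<^bsub>H\<^esub>, inv\<^bsub>G\<^esub> g \<otimes>\<^bsub>G\<^esub> a))"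
    unfolding counit_lin_eq bmul_eq by (auto simp: mem_B sh_def intro!: sum.cong)
  also have "\<dots> = (\<Sum>g\<in>carrier G. x (\<one>\<^bsub>H\<^esub>, g) * (\<Sum>a\<in>carrier G. y (\<one>\<^bsub>H\<^esub>, inv\<^bsub>G\<^esub> g \<otimes>\<^bsub>G\<^esub> a)))"
    by (subst sum.swap) (simp add: sum_distrib_left)
  also have "\<dots> = (\<Sum>g\<in>carrier G. x (\<one>\<^bsub>H\<^esub>, g) * (\<Sum>a\<in>carrier G. y (\<one>\<^bsub>H\<^esub>, a)))"
  proof (rule sum.cong[OF refl])
    fix g assume g: "g \<in> carrier G"
    show "x (\<one>\<^bsub>H\<^esub>, g) * (\<Sum>a\<in>carrier G. y (\<one>\<^bsub>H\<^esub>, inv\<^bsub>G\<^esub> g \<otimes>\<^bsub>G\<^esub> a)) = x (\<one>\<^bsub>H\<^esub>, g) * (\<Sum>a\<in>carrier G. y (\<one>\<^bsub>H\<^esub>, a))"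
      using g by (subst sum_G_shift[OF g]) (auto intro!: sum.cong simp: G.m_assoc[symmetric])
  qed
  also have "\<dots> = lin_form B (D_counit H) x * lin_form B (D_counit H) y"
    unfolding counit_lin_eq by (simp add: sum_distrib_right)
  finally show ?thesis .
qed

lemma counit_unit: "lin_form B (D_counit H) (D_unit G H) = (1::'k::field)"
proof -
  have "lin_form B (D_counit H) (D_unit G H) = (\<Sum>a\<in>carrier G. if a = \<one>\<^bsub>G\<^esub> \<and> True then 1 else (0::'k))"
    unfolding counit_lin_eq unit_eq by (auto intro!: sum.cong)
  then show ?thesis using fG by (simp add: sum_if_eq)
qed

lemma mult_vspace: "p \<in> B \<Longrightarrow> q \<in> B \<Longrightarrow> (D_mult G act p q :: _ \<Rightarrow> 'k::field) \<in> vspace B"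
  unfolding vspace_def by (auto simp: D_mult_eq)

lemma unit_vspace: "(D_unit G H :: _ \<Rightarrow> 'k::field) \<in> vspace B"
  unfolding vspace_def by (auto simp: unit_eq mem_B)

lemma comul_vspace: "p \<in> B \<Longrightarrow> (D_comul H p :: _ \<Rightarrow> 'k::field) \<in> vspace (B \<times> B)"
  unfolding vspace_def mem_Collect_eq
proof (intro allI impI)
  fix P assume p: "p \<in> B" and P: "P \<notin> B \<times> B"
  obtain h a k b where Pe: "P = ((h,a),(k,b))" by (metis prod.collapse)
  show "(D_comul H p P :: 'k) = 0" using p P unfolding Pe comul_eq by (auto simp: mem_B)
qed

lemma R_vspace: "(D_R G H \<gamma> :: _ \<Rightarrow> 'k::field) \<in> vspace (B \<times> B)"
  unfolding vspace_def mem_Collect_eq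
proof (intro allI impI)
  fix P assume P: "P \<notin> B \<times> B"
  obtain h a k b where Pe: "P = ((h,a),(k,b))" by (metis prod.collapse)
  show "(D_R G H \<gamma> P :: 'k) = 0" using P unfolding Pe R_eq by (auto simp: mem_B)
qed


definition Rinv :: "('h \<times> 'g) \<times> ('h \<times> 'g) \<Rightarrow> 'k::field" where
  "Rinv P = (if fst (fst P) \<in> carrier H \<and> snd (fst P) = \<one>\<^bsub>G\<^esub> \<and> fst (snd P) \<in> carrier H \<and>
      snd (snd P) = inv\<^bsub>G\<^esub> (\<gamma> (fst (fst P))) then 1 else 0)"

lemma Rinv_eq: "(Rinv ((x,a),(y,b)) :: 'k::field) =
   (if x \<in> carrier H \<and> a = \<one>\<^bsub>G\<^esub> \<and> y \<in> carrier H \<and> b = inv\<^bsub>G\<^esub> (\<gamma> x) then 1 else 0)"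
  by (simp add: Rinv_def)

lemma Rinv_vspace: "(Rinv :: _ \<Rightarrow> 'k::field) \<in> vspace (B \<times> B)"
  unfolding vspace_def mem_Collect_eq
proof (intro allI impI)
  fix P assume P: "P \<notin> B \<times> B"
  obtain h a k b where Pe: "P = ((h,a),(k,b))" by (metis prod.collapse)
  show "(Rinv P :: 'k) = 0" using P unfolding Pe Rinv_eq by (auto simp: mem_B)
qed

lemma R_Rinv: "bmul2 B (D_mult G act) (D_R G H \<gamma>) Rinv = tens (D_unit G H) (D_unit G H :: _ \<Rightarrow> 'k::field)"
proof
  fix P :: "('h \<times> 'g) \<times> ('h \<times> 'g)"
  obtain z1 c1 z2 c2 where P: "P = ((z1,c1),(z2,c2))" by (metis prod.collapse)
  show "bmul2 B (D_mult G act) (D_R G H \<gamma>) Rinv P = tens (D_unit G H) (D_unit G H :: _ \<Rightarrow> 'k::field) P"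
  proof (cases "(z1,c1) \<in> B \<and> (z2,c2) \<in> B")
    case False then show ?thesis unfolding P bmul2_eq by (auto simp: tens_def unit_eq mem_B)
  next
    case True
    then have z: "z1 \<in> carrier H" "z2 \<in> carrier H" "c1 \<in> carrier G" "c2 \<in> carrier G" by (auto simp: mem_B)
    have "bmul2 B (D_mult G act) (D_R G H \<gamma>) Rinv P = (\<Sum>a1\<in>carrier G. if a1 = \<one>\<^bsub>G\<^esub> \<and> True then
       (\<Sum>a2\<in>carrier G. if a2 = \<gamma> z1 \<and> True then (Rinv (sh a1 (z1,c1), sh a2 (z2,c2)) :: 'k) else 0) else 0)"
      unfolding P bmul2_eq using True z by (auto simp: R_eq mem_B intro!: sum.cong)
    also have "\<dots> = tens (D_unit G H) (D_unit G H :: _ \<Rightarrow> 'k::field) P"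
      using z fG unfolding P by (simp add: sum_if_eq sh_def Rinv_eq tens_def unit_eq)
    finally show ?thesis .
  qed
qed

lemma Rinv_R: "bmul2 B (D_mult G act) Rinv (D_R G H \<gamma>) = tens (D_unit G H) (D_unit G H :: _ \<Rightarrow> 'k::field)"
proof
  fix P :: "('h \<times> 'g) \<times> ('h \<times> 'g)"
  obtain z1 c1 z2 c2 where P: "P = ((z1,c1),(z2,c2))" by (metis prod.collapse)
  show "bmul2 B (D_mult G act) Rinv (D_R G H \<gamma>) P = tens (D_unit G H) (D_unit G H :: _ \<Rightarrow> 'k::field) P"
  proof (cases "(z1,c1) \<in> B \<and> (z2,c2) \<in> B")
    case False then show ?thesis unfolding P bmul2_eq by (auto simp: tens_def unit_eq mem_B)
  next
    case True
    then have z: "z1 \<in> carrier H" "z2 \<in> carrier H" "c1 \<in> carrier G" "c2 \<in> carrier G" by (auto simp: mem_B)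
    have "bmul2 B (D_mult G act) Rinv (D_R G H \<gamma>) P = (\<Sum>a1\<in>carrier G. if a1 = \<one>\<^bsub>G\<^esub> \<and> True then
       (\<Sum>a2\<in>carrier G. if a2 = inv\<^bsub>G\<^esub> (\<gamma> z1) \<and> True then (D_R G H \<gamma> (sh a1 (z1,c1), sh a2 (z2,c2)) :: 'k) else 0) else 0)"
      unfolding P bmul2_eq using True z by (auto simp: Rinv_eq mem_B intro!: sum.cong)
    also have "\<dots> = tens (D_unit G H) (D_unit G H :: _ \<Rightarrow> 'k::field) P"
      using z fG unfolding P by (simp add: sum_if_eq sh_def R_eq tens_def unit_eq)
    finally show ?thesis .
  qed
qed


lemma conj_fact: "z1 \<in> carrier H \<Longrightarrow> z2 \<in> carrier H \<Longrightarrow>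
   z1 \<otimes>\<^bsub>H\<^esub> act (inv\<^bsub>G\<^esub> (\<gamma> z1)) z2 = z2 \<otimes>\<^bsub>H\<^esub> z1"
proof -
  assume z: "z1 \<in> carrier H" "z2 \<in> carrier H"
  have "act (inv\<^bsub>G\<^esub> (\<gamma> z1)) z2 = inv\<^bsub>H\<^esub> z1 \<otimes>\<^bsub>H\<^esub> z2 \<otimes>\<^bsub>H\<^esub> z1"
    using act_gam[of "inv\<^bsub>H\<^esub> z1" z2] z by simp
  then show ?thesis using z by (simp add: H.m_assoc[symmetric])
qed

lemma RD_eq:
  assumes z: "z1 \<in> carrier H" "z2 \<in> carrier H" "e1 \<in> carrier G" "e2 \<in> carrier G"
  shows "bmul2 B (D_mult G act) (D_R G H \<gamma>) (lin_ext B (D_comul H) x) ((z1,e1),(z2,e2)) =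
    (if e2 = \<gamma> z1 \<otimes>\<^bsub>G\<^esub> e1 then x (z2 \<otimes>\<^bsub>H\<^esub> z1, e1) else (0 :: 'k::field))"
proof -
  have "bmul2 B (D_mult G act) (D_R G H \<gamma>) (lin_ext B (D_comul H) x) ((z1,e1),(z2,e2)) =
     (\<Sum>a1\<in>carrier G. if a1 = \<one>\<^bsub>G\<^esub> \<and> True then
       (\<Sum>a2\<in>carrier G. if a2 = \<gamma> z1 \<and> True then lin_ext B (D_comul H) x (sh a1 (z1,e1), sh a2 (z2,e2)) else 0) else 0)"
    unfolding bmul2_eq using z by (auto simp: R_eq mem_B intro!: sum.cong)
  also have "\<dots> = lin_ext B (D_comul H) x ((z1,e1), (act (inv\<^bsub>G\<^esub> (\<gamma> z1)) z2, inv\<^bsub>G\<^esub> (\<gamma> z1) \<otimes>\<^bsub>G\<^esub> e2))"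
    using z fG by (simp add: sum_if_eq sh_def)
  also have "\<dots> = (if e2 = \<gamma> z1 \<otimes>\<^bsub>G\<^esub> e1 then x (z2 \<otimes>\<^bsub>H\<^esub> z1, e1) else 0)"
    unfolding comul_lin_eq using z by (auto simp: conj_fact G.inv_solve_left')
  finally show ?thesis .
qed

lemma conj2: "c1 \<in> carrier G \<Longrightarrow> c2 \<in> carrier G \<Longrightarrow> z1 \<in> carrier H \<Longrightarrow>
   (c2 \<otimes>\<^bsub>G\<^esub> \<gamma> (act (inv\<^bsub>G\<^esub> c1) z1) = \<gamma> z1 \<otimes>\<^bsub>G\<^esub> c1) \<longleftrightarrow> c1 = c2"
proof -
  assume c: "c1 \<in> carrier G" "c2 \<in> carrier G" "z1 \<in> carrier H"
  have "c2 \<otimes>\<^bsub>G\<^esub> \<gamma> (act (inv\<^bsub>G\<^esub> c1) z1) = (c2 \<otimes>\<^bsub>G\<^esub> inv\<^bsub>G\<^esub> c1) \<otimes>\<^bsub>G\<^esub> (\<gamma> z1 \<otimes>\<^bsub>G\<^esub> c1)"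
    using c by (simp add: gam_act G.m_assoc)
  moreover have "((c2 \<otimes>\<^bsub>G\<^esub> inv\<^bsub>G\<^esub> c1) \<otimes>\<^bsub>G\<^esub> (\<gamma> z1 \<otimes>\<^bsub>G\<^esub> c1) = \<gamma> z1 \<otimes>\<^bsub>G\<^esub> c1) \<longleftrightarrow> c2 \<otimes>\<^bsub>G\<^esub> inv\<^bsub>G\<^esub> c1 = \<one>\<^bsub>G\<^esub>"
    using c by (intro G.r_cancel_one) auto
  moreover have "c2 \<otimes>\<^bsub>G\<^esub> inv\<^bsub>G\<^esub> c1 = \<one>\<^bsub>G\<^esub> \<longleftrightarrow> c1 = c2"
    using c by (auto simp: G.inv_solve_right')
  ultimately show ?thesis by simp
qed

lemma Rinv_sh:
  assumes "a1 \<in> carrier G" "a2 \<in> carrier G" "c1 \<in> carrier G" "c2 \<in> carrier G" "z1 \<in> carrier H" "z2 \<in> carrier H"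
  shows "(Rinv (sh a1 (z1,c1), sh a2 (z2,c2)) :: 'k::field) =
    (if a1 = c1 \<and> a2 = c2 \<otimes>\<^bsub>G\<^esub> \<gamma> (act (inv\<^bsub>G\<^esub> c1) z1) then 1 else 0)"
proof -
  have "(inv\<^bsub>G\<^esub> a1 \<otimes>\<^bsub>G\<^esub> c1 = \<one>\<^bsub>G\<^esub> \<and> inv\<^bsub>G\<^esub> a2 \<otimes>\<^bsub>G\<^esub> c2 = inv\<^bsub>G\<^esub> (\<gamma> (act (inv\<^bsub>G\<^esub> a1) z1))) \<longleftrightarrow>
     (a1 = c1 \<and> a2 = c2 \<otimes>\<^bsub>G\<^esub> \<gamma> (act (inv\<^bsub>G\<^esub> c1) z1))"
    using assms by (auto simp: G.inv_solve_left' G.inv_solve_right' G.m_assoc)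
  then show ?thesis using assms by (simp add: Rinv_eq sh_def)
qed

lemma braid_conj:
  "swap_tens (lin_ext B (D_comul H) x) =
   bmul2 B (D_mult G act) (bmul2 B (D_mult G act) (D_R G H \<gamma>) (lin_ext B (D_comul H) x)) (Rinv :: _ \<Rightarrow> 'k::field)"
proof
  fix P :: "('h \<times> 'g) \<times> ('h \<times> 'g)"
  obtain z1 c1 z2 c2 where P: "P = ((z1,c1),(z2,c2))" by (metis prod.collapse)
  show "swap_tens (lin_ext B (D_comul H) x) P =
   bmul2 B (D_mult G act) (bmul2 B (D_mult G act) (D_R G H \<gamma>) (lin_ext B (D_comul H) x)) (Rinv :: _ \<Rightarrow> 'k::field) P"
  proof (cases "(z1,c1) \<in> B \<and> (z2,c2) \<in> B")
    case False then show ?thesis unfolding P bmul2_eq swap_tens_def by (auto simp: comul_lin_eq mem_B)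
  next
    case True
    then have z: "z1 \<in> carrier H" "z2 \<in> carrier H" "c1 \<in> carrier G" "c2 \<in> carrier G" by (auto simp: mem_B)
    let ?D = "bmul2 B (D_mult G act) (D_R G H \<gamma>) (lin_ext B (D_comul H) x)"
    have "bmul2 B (D_mult G act) ?D Rinv P = (\<Sum>a1\<in>carrier G. if a1 = c1 \<and> True then
       (\<Sum>a2\<in>carrier G. if a2 = c2 \<otimes>\<^bsub>G\<^esub> \<gamma> (act (inv\<^bsub>G\<^esub> c1) z1) \<and> True then ?D ((z1,a1),(z2,a2)) else 0) else 0)"
      unfolding P bmul2_eq using True z by (auto simp: Rinv_sh mem_B intro!: sum.cong)
    also have "\<dots> = ?D ((z1,c1),(z2,c2 \<otimes>\<^bsub>G\<^esub> \<gamma> (act (inv\<^bsub>G\<^esub> c1) z1)))"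
      using z fG by (simp add: sum_if_eq)
    also have "\<dots> = swap_tens (lin_ext B (D_comul H) x) P"
      using z unfolding P swap_tens_def by (simp add: RD_eq conj2 comul_lin_eq)
    finally show ?thesis by simp
  qed
qed


lemma hex_left:
  "lin_ext (B \<times> B) (comul_left (D_comul H)) (D_R G H \<gamma>) =
   bmul3 B (D_mult G act) (\<lambda>(x, y, z). D_R G H \<gamma> (x, z) * D_unit G H y)
     (\<lambda>(x, y, z). D_unit G H x * (D_R G H \<gamma> (y, z) :: 'k::field))"
proof
  fix P :: "('h \<times> 'g) \<times> ('h \<times> 'g) \<times> ('h \<times> 'g)"
  obtain h a k b l c where P: "P = ((h,a),(k,b),(l,c))" by (metis prod.collapse)
  show "lin_ext (B \<times> B) (comul_left (D_comul H)) (D_R G H \<gamma>) P =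
   bmul3 B (D_mult G act) (\<lambda>(x, y, z). D_R G H \<gamma> (x, z) * D_unit G H y)
     (\<lambda>(x, y, z). D_unit G H x * (D_R G H \<gamma> (y, z) :: 'k::field)) P"
  proof (cases "(h,a) \<in> B \<and> (k,b) \<in> B \<and> (l,c) \<in> B")
    case False then show ?thesis unfolding P bmul3_eq comul_left_eq by (auto simp: R_eq mem_B)
  next
    case True
    then have z: "h \<in> carrier H" "k \<in> carrier H" "l \<in> carrier H" "a \<in> carrier G" "b \<in> carrier G" "c \<in> carrier G"
      by (auto simp: mem_B)
    have "bmul3 B (D_mult G act) (\<lambda>(x, y, z). D_R G H \<gamma> (x, z) * D_unit G H y)
     (\<lambda>(x, y, z). D_unit G H x * (D_R G H \<gamma> (y, z) :: 'k::field)) P =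
      (\<Sum>a1\<in>carrier G. if a1 = \<one>\<^bsub>G\<^esub> \<and> True then (\<Sum>a2\<in>carrier G. if a2 = \<one>\<^bsub>G\<^esub> \<and> True then
        (\<Sum>a3\<in>carrier G. if a3 = \<gamma> h \<and> True then D_unit G H (sh a1 (h,a)) * (D_R G H \<gamma> (sh a2 (k,b), sh a3 (l,c)) :: 'k)
         else 0) else 0) else 0)"
      unfolding P bmul3_eq using True z by (auto simp: R_eq unit_eq[of "(k, x)" for x] mem_B intro!: sum.cong)
    also have "\<dots> = D_unit G H (h,a) * (D_R G H \<gamma> ((k,b), (act (inv\<^bsub>G\<^esub> (\<gamma> h)) l, inv\<^bsub>G\<^esub> (\<gamma> h) \<otimes>\<^bsub>G\<^esub> c)) :: 'k)"
      using z fG by (simp add: sum_if_eq sh_def)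
    also have "\<dots> = lin_ext (B \<times> B) (comul_left (D_comul H)) (D_R G H \<gamma>) P"
      unfolding P comul_left_eq using z by (auto simp: R_eq unit_eq mem_B G.inv_solve_left')
    finally show ?thesis by simp
  qed
qed

lemma hex_right:
  "lin_ext (B \<times> B) (comul_right (D_comul H)) (D_R G H \<gamma>) =
   bmul3 B (D_mult G act) (\<lambda>(x, y, z). D_R G H \<gamma> (x, z) * D_unit G H y)
     (\<lambda>(x, y, z). D_R G H \<gamma> (x, y) * (D_unit G H z :: 'k::field))"
proof
  fix P :: "('h \<times> 'g) \<times> ('h \<times> 'g) \<times> ('h \<times> 'g)"
  obtain h a k b l c where P: "P = ((h,a),(k,b),(l,c))" by (metis prod.collapse)
  show "lin_ext (B \<times> B) (comul_right (D_comul H)) (D_R G H \<gamma>) P =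
   bmul3 B (D_mult G act) (\<lambda>(x, y, z). D_R G H \<gamma> (x, z) * D_unit G H y)
     (\<lambda>(x, y, z). D_R G H \<gamma> (x, y) * (D_unit G H z :: 'k::field)) P"
  proof (cases "(h,a) \<in> B \<and> (k,b) \<in> B \<and> (l,c) \<in> B")
    case False then show ?thesis unfolding P bmul3_eq comul_right_eq by (auto simp: R_eq mem_B)
  next
    case True
    then have z: "h \<in> carrier H" "k \<in> carrier H" "l \<in> carrier H" "a \<in> carrier G" "b \<in> carrier G" "c \<in> carrier G"
      by (auto simp: mem_B)
    have "bmul3 B (D_mult G act) (\<lambda>(x, y, z). D_R G H \<gamma> (x, z) * D_unit G H y)
     (\<lambda>(x, y, z). D_R G H \<gamma> (x, y) * (D_unit G H z :: 'k::field)) P =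
      (\<Sum>a1\<in>carrier G. if a1 = \<one>\<^bsub>G\<^esub> \<and> True then (\<Sum>a2\<in>carrier G. if a2 = \<one>\<^bsub>G\<^esub> \<and> True then
        (\<Sum>a3\<in>carrier G. if a3 = \<gamma> h \<and> True then D_R G H \<gamma> (sh a1 (h,a), sh a2 (k,b)) * (D_unit G H (sh a3 (l,c)) :: 'k)
         else 0) else 0) else 0)"
      unfolding P bmul3_eq using True z by (auto simp: R_eq unit_eq mem_B intro!: sum.cong)
    also have "\<dots> = D_R G H \<gamma> ((h,a),(k,b)) * (D_unit G H (act (inv\<^bsub>G\<^esub> (\<gamma> h)) l, inv\<^bsub>G\<^esub> (\<gamma> h) \<otimes>\<^bsub>G\<^esub> c) :: 'k)"
      using z fG by (simp add: sum_if_eq sh_def)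
    also have "\<dots> = lin_ext (B \<times> B) (comul_right (D_comul H)) (D_R G H \<gamma>) P"
      unfolding P comul_right_eq using z by (auto simp: R_eq unit_eq mem_B G.inv_solve_left')
    finally show ?thesis by simp
  qed
qed

end

theorem mainTheorem3:
  fixes G :: "'g monoid" and H :: "'h monoid"
    and act :: "'g \<Rightarrow> 'h \<Rightarrow> 'h" and \<gamma> :: "'h \<Rightarrow> 'g"
  assumes "crossed_module G H act \<gamma>"
    and "finite (carrier G)" and "finite (carrier H)"
  shows "braided_bialgebra (D_basis G H) (D_mult G act :: _ \<Rightarrow> _ \<Rightarrow> _ \<Rightarrow> 'k::field)
           (D_unit G H) (D_comul H) (D_counit H) (D_R G H \<gamma>)"
proof -
  interpret cmod G H act \<gamma> using assms by (unfold_locales)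
  have bi: "bialgebra (D_basis G H) (D_mult G act :: _ \<Rightarrow> _ \<Rightarrow> _ \<Rightarrow> 'k::field)
           (D_unit G H) (D_comul H) (D_counit H)"
    unfolding bialgebra_def
    by (intro conjI ballI finB mult_vspace unit_vspace comul_vspace mult_assoc unit_left unit_right coassoc
      counit_left counit_right comul_mult comul_unit counit_mult counit_unit; assumption)
  have ex: "\<exists>R'\<in>vspace (B \<times> B).
        bmul2 B (D_mult G act) (D_R G H \<gamma>) R' = tens (D_unit G H) (D_unit G H :: _ \<Rightarrow> 'k) \<and>
        bmul2 B (D_mult G act) R' (D_R G H \<gamma>) = tens (D_unit G H) (D_unit G H) \<and>
        (\<forall>x\<in>vspace B. swap_tens (lin_ext B (D_comul H) x) =
           bmul2 B (D_mult G act) (bmul2 B (D_mult G act) (D_R G H \<gamma>) (lin_ext B (D_comul H) x)) R')"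
    by (intro bexI[of _ Rinv] conjI ballI Rinv_vspace R_Rinv Rinv_R braid_conj)
  show ?thesis unfolding braided_bialgebra_def
    by (intro conjI bi R_vspace ex hex_left hex_right)
qed

end
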